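(* Let $\Gamma=\langle V,(w_u)_{u\in V},\alpha,1\rangle$ be a celebrity game with critical distance $\beta=1$, and let $G=(V,E)$ be the outcome graph of a strategy profile of minimum social cost. Then for any distinct $u,v\in V$: if $w_u+w_v<\alpha$ then $\{u,v\}\notin E$, and if $w_u+w_v>\alpha$ then $\{u,v\}\in E$.
   Context: A celebrity game $\Gamma=\langle V,(w_u)_{u\in V},\alpha,\beta\rangle$ consists of a set of players $V=\{1,\dots,n\}$, celebrity weights $w_u>0$, a link cost $\alpha>0$ and a critical distance $\beta$ with $1\le\beta\le n-1$. A strategy of player $u$ is a set $S_u\subseteq V\setminus\{u\}$; a strategy profile is $S=(S_1,\dots,S_n)$; its outcome graph $G[S]$ is the undirected graph on $V$ with edge set $\{\{u,v\}: u\in S_v\text{ or }v\in S_u\}$. With $d_G$ the graph distance (infinite between different connected components), the cost of player $u$ is $c_u(S)=\alpha|S_u|+\sum_{v:\,d_{G[S]}(u,v)>\beta}w_v$ and the social cost is $C(S)=\sum_{u\in V}c_u(S)$. *)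

theory Defs
  imports Main "HOL-Library.Extended_Nat"
begin

definition players :: "nat \<Rightarrow> nat set" where
  "players n = {1..n}"

definition valid_profile :: "nat \<Rightarrow> (nat \<Rightarrow> nat set) \<Rightarrow> bool" where
  "valid_profile n S \<longleftrightarrow> (\<forall>u\<in>players n. S u \<subseteq> players n - {u})"

definition outcome_edge :: "(nat \<Rightarrow> nat set) \<Rightarrow> nat \<Rightarrow> nat \<Rightarrow> bool" where
  "outcome_edge S u v \<longleftrightarrow> u \<in> S v \<or> v \<in> S u"

definition is_walk :: "nat \<Rightarrow> (nat \<Rightarrow> nat set) \<Rightarrow> nat list \<Rightarrow> bool" where
  "is_walk n S xs \<longleftrightarrow> xs \<noteq> [] \<and> set xs \<subseteq> players n \<and>
     (\<forall>i. Suc i < length xs \<longrightarrow> outcome_edge S (xs ! i) (xs ! Suc i))"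

text \<open>Graph distance in G[S] (infinite if no walk exists).\<close>
definition gdist :: "nat \<Rightarrow> (nat \<Rightarrow> nat set) \<Rightarrow> nat \<Rightarrow> nat \<Rightarrow> enat" where
  "gdist n S u v = (INF xs \<in> {xs. is_walk n S xs \<and> hd xs = u \<and> last xs = v}.
                      enat (length xs - 1))"

definition player_cost :: "nat \<Rightarrow> (nat \<Rightarrow> real) \<Rightarrow> real \<Rightarrow> nat \<Rightarrow> (nat \<Rightarrow> nat set) \<Rightarrow> nat \<Rightarrow> real" where
  "player_cost n w \<alpha> \<beta> S u =
     \<alpha> * real (card (S u)) + (\<Sum>v\<in>{v\<in>players n. gdist n S u v > enat \<beta>}. w v)"

definition social_cost :: "nat \<Rightarrow> (nat \<Rightarrow> real) \<Rightarrow> real \<Rightarrow> nat \<Rightarrow> (nat \<Rightarrow> nat set) \<Rightarrow> real" where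
  "social_cost n w \<alpha> \<beta> S = (\<Sum>u\<in>players n. player_cost n w \<alpha> \<beta> S u)"

definition celebrity_game :: "nat \<Rightarrow> (nat \<Rightarrow> real) \<Rightarrow> real \<Rightarrow> nat \<Rightarrow> bool" where
  "celebrity_game n w \<alpha> \<beta> \<longleftrightarrow> (\<forall>u\<in>players n. w u > 0) \<and> \<alpha> > 0 \<and> 1 \<le> \<beta> \<and> \<beta> \<le> n - 1"

definition social_optimum :: "nat \<Rightarrow> (nat \<Rightarrow> real) \<Rightarrow> real \<Rightarrow> nat \<Rightarrow> (nat \<Rightarrow> nat set) \<Rightarrow> bool" where
  "social_optimum n w \<alpha> \<beta> S \<longleftrightarrow> valid_profile n S \<and>
     (\<forall>S'. valid_profile n S' \<longrightarrow> social_cost n w \<alpha> \<beta> S \<le> social_cost n w \<alpha> \<beta> S')"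

end

theory Submission
  imports Defs
begin

lemma walk_single: "x \<in> players n \<Longrightarrow> is_walk n S [x]"
  by (simp add: is_walk_def)

lemma walk_two: "x \<in> players n \<Longrightarrow> y \<in> players n \<Longrightarrow> outcome_edge S x y \<Longrightarrow> is_walk n S [x,y]"
  unfolding is_walk_def by (auto simp: less_Suc_eq nth_Cons')

lemma gdist_gt1:
  assumes "x \<in> players n" "y \<in> players n"
  shows "gdist n S x y > enat 1 \<longleftrightarrow> x \<noteq> y \<and> \<not> outcome_edge S x y"
proof
  assume g: "gdist n S x y > enat 1"
  show "x \<noteq> y \<and> \<not> outcome_edge S x y"
  proof (rule ccontr)
    assume "\<not> (x \<noteq> y \<and> \<not> outcome_edge S x y)"
    then consider "x = y" | "outcome_edge S x y" by blast
    then have "gdist n S x y \<le> enat 1"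
    proof cases
      case 1
      have "[x] \<in> {xs. is_walk n S xs \<and> hd xs = x \<and> last xs = y}"
        using 1 assms walk_single by auto
      then have "gdist n S x y \<le> enat (length [x] - 1)"
        unfolding gdist_def by (rule INF_lower)
      then show ?thesis by (simp add: zero_enat_def[symmetric])
    next
      case 2
      have "[x,y] \<in> {xs. is_walk n S xs \<and> hd xs = x \<and> last xs = y}"
        using 2 assms walk_two by auto
      then have "gdist n S x y \<le> enat (length [x,y] - 1)"
        unfolding gdist_def by (rule INF_lower)
      then show ?thesis by simp
    qed
    with g show False by simp
  qed
next
  assume h: "x \<noteq> y \<and> \<not> outcome_edge S x y"
  show "gdist n S x y > enat 1"
  proof (rule ccontr)
    assume "\<not> gdist n S x y > enat 1"
    then have le: "gdist n S x y \<le> enat 1" by simp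
    let ?A = "{xs. is_walk n S xs \<and> hd xs = x \<and> last xs = y}"
    have ne: "?A \<noteq> {}"
    proof
      assume "?A = {}"
      then have "gdist n S x y = \<infinity>" unfolding gdist_def by (metis INF_empty top_enat_def)
      with le show False by simp
    qed
    have "gdist n S x y \<in> (\<lambda>xs. enat (length xs - 1)) ` ?A"
    proof -
      from ne obtain z where "z \<in> ?A" by blast
      then have "enat (length z - 1) \<in> (\<lambda>xs. enat (length xs - 1)) ` ?A" by (rule imageI)
      then show ?thesis unfolding gdist_def by (rule wellorder_InfI)
    qed
    then obtain xs where xs: "xs \<in> ?A" and eq: "gdist n S x y = enat (length xs - 1)" by auto
    from le eq have len: "length xs \<le> 2" by simp
    from xs have wk: "is_walk n S xs" "hd xs = x" "last xs = y" by auto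
    then have "xs \<noteq> []" by (simp add: is_walk_def)
    then obtain a r where r: "xs = a # r" by (cases xs) auto
    show False
    proof (cases r)
      case Nil then show False using wk r h by simp
    next
      case (Cons b t)
      with len r have t: "t = []" by simp
      have "outcome_edge S (xs!0) (xs ! Suc 0)" using wk(1) r Cons unfolding is_walk_def by auto
      then show False using wk r Cons t h by simp
    qed
  qed
qed

definition hh :: "nat \<Rightarrow> (nat \<Rightarrow> real) \<Rightarrow> (nat \<Rightarrow> nat set) \<Rightarrow> nat \<Rightarrow> nat \<Rightarrow> real" where
  "hh n w S x y = (if x \<noteq> y \<and> \<not> outcome_edge S x y then w y else 0)"

lemma pc_eq:
  assumes "x \<in> players n"
  shows "player_cost n w \<alpha> 1 S x = \<alpha> * real (card (S x)) + (\<Sum>y\<in>players n. hh n w S x y)"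
proof -
  have "{v\<in>players n. gdist n S x v > enat 1} = {v\<in>players n. x \<noteq> v \<and> \<not> outcome_edge S x v}"
    using gdist_gt1[OF assms] by auto
  moreover have "(\<Sum>y\<in>players n. hh n w S x y) = (\<Sum>v\<in>{v\<in>players n. x \<noteq> v \<and> \<not> outcome_edge S x v}. w v)"
    unfolding hh_def by (simp add: sum.inter_filter[symmetric] players_def)
  ultimately show ?thesis unfolding player_cost_def by (simp add: one_enat_def)
qed

lemma sc_diff:
  "social_cost n w \<alpha> 1 S' - social_cost n w \<alpha> 1 S =
   \<alpha> * (\<Sum>x\<in>players n. real (card (S' x)) - real (card (S x))) +
   (\<Sum>x\<in>players n. \<Sum>y\<in>players n. hh n w S' x y - hh n w S x y)"
proof -
  have "\<And>T. social_cost n w \<alpha> 1 T = (\<Sum>x\<in>players n. \<alpha> * real (card (T x)) + (\<Sum>y\<in>players n. hh n w T x y))"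
    unfolding social_cost_def by (intro sum.cong refl pc_eq)
  then show ?thesis
    by (simp add: sum_subtractf sum_distrib_left sum.distrib right_diff_distrib)
qed

lemma dsum1:
  assumes "u \<in> P" "v \<in> P" "finite P"
  shows "(\<Sum>x\<in>P. \<Sum>y\<in>P. (if x = u \<and> y = v then a else 0)) = (a :: real)"
proof -
  have "\<And>x. (\<Sum>y\<in>P. (if x = u \<and> y = v then a else 0)) = (if x = u then a else 0)"
  proof -
    fix x show "(\<Sum>y\<in>P. (if x = u \<and> y = v then a else 0)) = (if x = u then a else 0)"
      using assms by (cases "x = u") simp_all
  qed
  then show ?thesis using assms by simp
qed

lemma dsum2:
  assumes "u \<in> P" "v \<in> P" "u \<noteq> v" "finite P"
  shows "(\<Sum>x\<in>P. \<Sum>y\<in>P. (if x = u \<and> y = v then a else 0) + (if x = v \<and> y = u then b else 0)) = (a + b :: real)"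
proof -
  have "(\<Sum>x\<in>P. \<Sum>y\<in>P. (if x = u \<and> y = v then a else 0) + (if x = v \<and> y = u then b else 0))
     = (\<Sum>x\<in>P. \<Sum>y\<in>P. (if x = u \<and> y = v then a else 0)) + (\<Sum>x\<in>P. \<Sum>y\<in>P. (if x = v \<and> y = u then b else 0))"
    by (simp only: sum.distrib)
  also have "\<dots> = a + b" using dsum1[of u P v a] dsum1[of v P u b] assms by simp
  finally show ?thesis .
qed

lemma rc: "finite A \<Longrightarrow> real (card (A - {a})) = real (card A) - (if a \<in> A then 1 else 0)"
proof (cases "a \<in> A")
  case True
  assume "finite A"
  then have "card A = Suc (card (A - {a}))" using True by (metis card.remove)
  then show ?thesis using True by simp
qed simp

lemma fin_players: "finite (players n)" by (simp add: players_def)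

theorem proposition12:
  fixes n :: nat and w :: "nat \<Rightarrow> real" and \<alpha> :: real and S :: "nat \<Rightarrow> nat set"
  assumes "celebrity_game n w \<alpha> 1"
    and "social_optimum n w \<alpha> 1 S"
    and "u \<in> players n" and "v \<in> players n" and "u \<noteq> v"
  shows "(w u + w v < \<alpha> \<longrightarrow> \<not> outcome_edge S u v) \<and>
         (w u + w v > \<alpha> \<longrightarrow> outcome_edge S u v)"
proof -
  have val: "valid_profile n S" and opt: "\<And>S'. valid_profile n S' \<Longrightarrow> social_cost n w \<alpha> 1 S \<le> social_cost n w \<alpha> 1 S'"
    using assms(2) unfolding social_optimum_def by auto
  have finS: "\<And>x. x \<in> players n \<Longrightarrow> finite (S x)"
    using val unfolding valid_profile_def by (meson finite_Diff fin_players finite_subset)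
  have P: "u \<in> players n" "v \<in> players n" "u \<noteq> v" by fact+
  show ?thesis
  proof (intro conjI impI)
    assume lt: "w u + w v < \<alpha>"
    show "\<not> outcome_edge S u v"
    proof
      assume e: "outcome_edge S u v"
      define S' where "S' = S(u := S u - {v}, v := S v - {u})"
      have val': "valid_profile n S'" using val P unfolding valid_profile_def S'_def by auto
      have edge': "\<And>x y. outcome_edge S' x y \<longleftrightarrow> outcome_edge S x y \<and> \<not> ((x = u \<and> y = v) \<or> (x = v \<and> y = u))"
        unfolding S'_def outcome_edge_def using P by auto
      have h: "\<And>x y. hh n w S' x y - hh n w S x y = (if x = u \<and> y = v then w v else 0) + (if x = v \<and> y = u then w u else 0)"
        unfolding hh_def using edge' e P by (auto simp: outcome_edge_def)
      define a where "a = (if v \<in> S u then 1 else 0 :: real)"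
      define b where "b = (if u \<in> S v then 1 else 0 :: real)"
      have ab: "a + b \<ge> 1" using e unfolding a_def b_def outcome_edge_def by auto
      have c: "\<And>x. x \<in> players n \<Longrightarrow> real (card (S' x)) - real (card (S x)) = (if x = u then -a else 0) + (if x = v then -b else 0)"
        unfolding S'_def a_def b_def using P finS by (auto simp: rc)
      have "(\<Sum>x\<in>players n. real (card (S' x)) - real (card (S x))) = (\<Sum>x\<in>players n. (if x = u then -a else 0) + (if x = v then -b else 0))"
        using c by (rule sum.cong[OF refl])
      also have "\<dots> = -a - b" using P fin_players by (simp add: sum.distrib)
      finally have cs: "(\<Sum>x\<in>players n. real (card (S' x)) - real (card (S x))) = -a - b" .
      have hs: "(\<Sum>x\<in>players n. \<Sum>y\<in>players n. hh n w S' x y - hh n w S x y) = w v + w u"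
        unfolding h using dsum2[OF P fin_players] by simp
      have "social_cost n w \<alpha> 1 S' - social_cost n w \<alpha> 1 S = \<alpha> * (-a - b) + (w v + w u)"
        using sc_diff cs hs by simp
      moreover have "\<alpha> * (-a - b) \<le> -\<alpha>"
      proof -
        have "\<alpha> > 0" using assms(1) unfolding celebrity_game_def by simp
        then have "\<alpha> * 1 \<le> \<alpha> * (a + b)" using ab by (intro mult_left_mono) auto
        then show ?thesis by (simp add: algebra_simps)
      qed
      ultimately have "social_cost n w \<alpha> 1 S' < social_cost n w \<alpha> 1 S" using lt by linarith
      with opt[OF val'] show False by simp
    qed
  next
    assume gt: "w u + w v > \<alpha>"
    show "outcome_edge S u v"
    proof (rule ccontr)
      assume e: "\<not> outcome_edge S u v"
      define S' where "S' = S(u := insert v (S u))"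
      have val': "valid_profile n S'" using val P unfolding valid_profile_def S'_def by auto
      have edge': "\<And>x y. outcome_edge S' x y \<longleftrightarrow> outcome_edge S x y \<or> ((x = u \<and> y = v) \<or> (x = v \<and> y = u))"
        unfolding S'_def outcome_edge_def using P by auto
      have e2: "\<not> outcome_edge S v u" using e unfolding outcome_edge_def by auto
      have h: "\<And>x y. hh n w S' x y - hh n w S x y = (if x = u \<and> y = v then - w v else 0) + (if x = v \<and> y = u then - w u else 0)"
        unfolding hh_def using edge' e e2 P by auto
      have vn: "v \<notin> S u" using e unfolding outcome_edge_def by auto
      have c: "\<And>x. x \<in> players n \<Longrightarrow> real (card (S' x)) - real (card (S x)) = (if x = u then 1 else 0)"
      proof -
        fix x assume x: "x \<in> players n"
        show "real (card (S' x)) - real (card (S x)) = (if x = u then 1 else 0)"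
        proof (cases "x = u")
          case True
          then show ?thesis using finS[OF P(1)] vn unfolding S'_def by simp
        next
          case False
          then show ?thesis unfolding S'_def by simp
        qed
      qed
      have "(\<Sum>x\<in>players n. real (card (S' x)) - real (card (S x))) = (\<Sum>x\<in>players n. (if x = u then 1 else 0))"
        using c by (rule sum.cong[OF refl])
      also have "\<dots> = 1" using P fin_players by simp
      finally have cs: "(\<Sum>x\<in>players n. real (card (S' x)) - real (card (S x))) = 1" .
      have hs: "(\<Sum>x\<in>players n. \<Sum>y\<in>players n. hh n w S' x y - hh n w S x y) = - w v + - w u"
        unfolding h using dsum2[OF P fin_players] by simp
      have "social_cost n w \<alpha> 1 S' - social_cost n w \<alpha> 1 S = \<alpha> - w v - w u"
        using sc_diff cs hs by simp
      then have "social_cost n w \<alpha> 1 S' < social_cost n w \<alpha> 1 S" using gt by linarith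
      with opt[OF val'] show False by simp
    qed
  qed
qed

end
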